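(* $\mathrm{FO}(\perp\!\!\!\perp)\not\le\mathrm{ESO}_{\mathbb R}[\le,+,0,1]$; that is, there is a formula $\phi\in\mathrm{FO}(\perp\!\!\!\perp)$ (for instance $\phi(x)=\exists c\,\exists y\,\forall z\,(\mathrm{dep}(c)\wedge x\perp\!\!\!\perp y\wedge x\approx y\wedge((x=c\wedge y=c)\leftrightarrow z=c))$, where $\mathrm{dep}(c)$ and $x\approx y$ are expressible in $\mathrm{FO}(\perp\!\!\!\perp)$) such that no formula $\psi$ of $\mathrm{ESO}_{\mathbb R}[\le,+,0,1]$ satisfies $\mathrm{Struc}_{d[0,1]}(\phi)=\mathrm{Struc}_{d[0,1]}(\psi)$.
   Context: Conventions on structures and $\mathrm{ESO}_{\mathbb R}$. Let $\tau$ be a finite relational vocabulary and $\sigma$ a finite functional vocabulary. An $\mathbb R$-structure of vocabulary $\tau\cup\sigma$ is a tuple $\mathfrak A=(A,\mathbb R,(R^{\mathfrak A})_{R\in\tau},(g^{\mathfrak A})_{g\in\sigma})$ where $A$ is a finite set with at least two elements, each $R^{\mathfrak A}\subseteq A^{\mathrm{ar}(R)}$ and each $g^{\mathfrak A}\colon A^{\mathrm{ar}(g)}\to\mathbb R$. $\mathfrak A$ is a $d[0,1]$-structure if every $g^{\mathfrak A}$ is a probability distribution on $A^{\mathrm{ar}(g)}$. Numerical terms are built by $i::=c\mid f(\vec x)\mid i+i\mid i\times i\mid \mathrm{SUM}_{\vec y}\,i$, where $c\in\mathbb R$ is a constant, $f$ is a function symbol or function variable, and $\vec x,\vec y$ are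 tuples of first-order variables, with the usual real interpretation. For $O\subseteq\{+,\times,\mathrm{SUM}\}$, $E\subseteq\{=,<,\le\}$, $C\subseteq\mathbb R$, the formulae of $\mathrm{ESO}_{\mathbb R}[O,E,C]$ are given by $\phi::= x=y\mid\neg x=y\mid i\,e\,j\mid\neg\, i\,e\,j\mid R(\vec x)\mid\neg R(\vec x)\mid\phi\wedge\phi\mid\phi\vee\phi\mid\exists x\phi\mid\forall x\phi\mid\exists f\phi$, where $i,j$ are numerical terms using only operations in $O$ and constants in $C$, $e\in E$, $R\in\tau$, and $f$ is a function variable; first-order variables range over $A$ and $\exists f$ ranges over all functions $A^{\mathrm{ar}(f)}\to\mathbb R$. $\mathrm{ESO}_{\mathbb R}[\le,+,0,1]$ means $O=\{+\}$, $E=\{\le\}$, $C=\{0,1\}$. Teams and probabilistic team semantics. A probabilistic team is a function $\mathbb X\colon X\to[0,1]$ with $\sum_{s\in X}\mathbb X(s)=1$, $X$ a finite set of assignments from a finite variable set into a finite set $A$. Write $\mathrm{supp}(\mathbb X)=\{s:\mathbb X(s)>0\}$, $|\mathbb X|=\sum_s\mathbb X(s)$, $\mathbb X_\alpha$ for the restriction to assignments satisfying first-order $\alpha$. The marginal of $\mathbb X$ on $V$ is $s\mapsto\sum_{t\upharpoonright V=s}\mathbb X(t)$; $\mathbb X[A/x]$ is the team on assignments $s$ over $\mathrm{Dom}(\mathbb X)\cup\{x\}$ with $s(x)\in A$, given by $s\mapsto\mathbb X'(s\upharpoonright(\mathrm{Dom}(\mathbb X)\setminus\{x\}))/|A|$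 with $\mathbb X'$ the marginal on $\mathrm{Dom}(\mathbb X)\setminus\{x\}$. Formulae are in negation normal form; $\alpha\leftrightarrow\beta$ for first-order $\alpha,\beta$ abbreviates $(\alpha\wedge\beta)\vee(\alpha^\bot\wedge\beta^\bot)$ with $\alpha^\bot$ the negation normal form of $\neg\alpha$. Clauses: literals hold iff they hold for every $s\in\mathrm{supp}(\mathbb X)$; $\wedge$ componentwise; $\psi\vee\theta$ iff $\mathbb X=\alpha\mathbb Y+(1-\alpha)\mathbb Z$ for probabilistic teams $\mathbb Y\models\psi$, $\mathbb Z\models\theta$, $\alpha\in[0,1]$; $\forall x\psi$ iff $\mathbb X[A/x]\models\psi$; $\exists x\psi$ iff some probabilistic team over $\mathrm{Dom}(\mathbb X)\cup\{x\}$ with the same marginal on $\mathrm{Dom}(\mathbb X)\setminus\{x\}$ as $\mathbb X$ satisfies $\psi$. Atoms: $\vec x\approx\vec y$ iff $|\mathbb X_{\vec x=\vec a}|=|\mathbb X_{\vec y=\vec a}|$ for all $\vec a$; $\mathrm{dep}(c)$ iff $c$ is constant on $\mathrm{supp}(\mathbb X)$; $\vec y\perp\!\!\!\perp\vec z$ iff $|\mathbb X_{\vec y=\vec b}|\cdot|\mathbb X_{\vec z=\vec c}|=|\mathbb X_{\vec y\vec z=\vec b\vec c}|\cdot|\mathbb X|$ for all $\vec b,\vec c$. $\mathrm{FO}(\perp\!\!\!\perp)$ is first-order logic extended with marginal independence atoms. Comparing team logics with ESO. For a probabilistic team $\mathbb X$ with variable domain $\{x_1,\dots,x_n\}$ and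 values in $A$, $f_{\mathbb X}\colon A^n\to[0,1]$ is given by $f_{\mathbb X}(s(x_1),\dots,s(x_n))=\mathbb X(s)$ for $s$ in the team and $0$ elsewhere. For $\phi\in\mathrm{FO}(\mathcal C)$ of vocabulary $\tau$ with free variables $x_1,\dots,x_n$, $\mathrm{Struc}_{d[0,1]}(\phi)$ is the class of $d[0,1]$-structures $\mathfrak A$ of vocabulary $\tau\cup\{f\}$ ($f$ $n$-ary) such that the $\tau$-reduct of $\mathfrak A$ satisfies $\phi$ under the probabilistic team $\mathbb X$ with $f_{\mathbb X}=f^{\mathfrak A}$. For an ESO-type formula with one free $n$-ary function variable $f$ and no free first-order variables, $\mathrm{Struc}_{d[0,1]}$ is the class of $d[0,1]$-structures of vocabulary $\tau\cup\{f\}$ satisfying it. For logics $\mathcal L,\mathcal L'$, $\mathcal L\le\mathcal L'$ means every $\phi\in\mathcal L$ has some $\phi'\in\mathcal L'$ with $\mathrm{Struc}_{d[0,1]}(\phi)=\mathrm{Struc}_{d[0,1]}(\phi')$. *)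

theory Defs
  imports Complex_Main
begin

text \<open>Relation symbols and function (variable) symbols are pairs (name, arity).
Universes are finite subsets of nat (classes are isomorphism closed).\<close>

type_synonym sym = "nat \<times> nat"

record rstruc =
  univ :: "nat set"
  rel  :: "sym \<Rightarrow> nat list set"
  fval :: "nat list \<Rightarrow> real"

definition tuples :: "nat \<Rightarrow> nat set \<Rightarrow> nat list set" where
  "tuples k A = {l. length l = k \<and> set l \<subseteq> A}"

text \<open>d[0,1]-structure of vocabulary tau plus one n-ary function symbol f.\<close>
definition is_dstruc :: "sym set \<Rightarrow> nat \<Rightarrow> rstruc \<Rightarrow> bool" where
  "is_dstruc tau n M \<longleftrightarrow>
     finite (univ M) \<and> card (univ M) \<ge> 2 \<and>
     (\<forall>R\<in>tau. rel M R \<subseteq> tuples (snd R) (univ M)) \<and>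
     (\<forall>R. R \<notin> tau \<longrightarrow> rel M R = {}) \<and>
     (\<forall>l. l \<notin> tuples n (univ M) \<longrightarrow> fval M l = 0) \<and>
     (\<forall>l. fval M l \<ge> 0) \<and>
     (\<Sum>l\<in>tuples n (univ M). fval M l) = 1"

datatype fo =
    FEq nat nat | FNeq nat nat
  | FRel sym "nat list" | FNRel sym "nat list"
  | FAnd fo fo | FOr fo fo
  | FEx nat fo | FAll nat fo
  | FInd "nat list" "nat list"

primrec fo_fv :: "fo \<Rightarrow> nat set" where
  "fo_fv (FEq x y) = {x, y}"
| "fo_fv (FNeq x y) = {x, y}"
| "fo_fv (FRel R xs) = set xs"
| "fo_fv (FNRel R xs) = set xs"
| "fo_fv (FAnd p q) = fo_fv p \<union> fo_fv q"
| "fo_fv (FOr p q) = fo_fv p \<union> fo_fv q"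
| "fo_fv (FEx x p) = fo_fv p - {x}"
| "fo_fv (FAll x p) = fo_fv p - {x}"
| "fo_fv (FInd ys zs) = set ys \<union> set zs"

primrec fo_wf :: "sym set \<Rightarrow> fo \<Rightarrow> bool" where
  "fo_wf tau (FEq x y) = True"
| "fo_wf tau (FNeq x y) = True"
| "fo_wf tau (FRel R xs) = (R \<in> tau \<and> length xs = snd R)"
| "fo_wf tau (FNRel R xs) = (R \<in> tau \<and> length xs = snd R)"
| "fo_wf tau (FAnd p q) = (fo_wf tau p \<and> fo_wf tau q)"
| "fo_wf tau (FOr p q) = (fo_wf tau p \<and> fo_wf tau q)"
| "fo_wf tau (FEx x p) = fo_wf tau p"
| "fo_wf tau (FAll x p) = fo_wf tau p"
| "fo_wf tau (FInd ys zs) = True"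

type_synonym asg = "nat \<rightharpoonup> nat"
type_synonym pteam = "asg \<Rightarrow> real"

definition asgs :: "nat set \<Rightarrow> nat set \<Rightarrow> asg set" where
  "asgs A V = {s. dom s = V \<and> ran s \<subseteq> A}"

definition is_pteam :: "nat set \<Rightarrow> nat set \<Rightarrow> pteam \<Rightarrow> bool" where
  "is_pteam A V X \<longleftrightarrow> (\<forall>s. X s \<ge> 0) \<and> (\<forall>s. s \<notin> asgs A V \<longrightarrow> X s = 0)
     \<and> (\<Sum>s\<in>asgs A V. X s) = 1"

definition marg :: "nat set \<Rightarrow> nat set \<Rightarrow> nat set \<Rightarrow> pteam \<Rightarrow> pteam" where
  "marg A W U X = (\<lambda>s. if s \<in> asgs A U
      then (\<Sum>t\<in>{t\<in>asgs A W. t |` U = s}. X t) else 0)"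

definition sup_team :: "nat set \<Rightarrow> nat set \<Rightarrow> nat \<Rightarrow> pteam \<Rightarrow> pteam" where
  "sup_team A V x X = (\<lambda>s. if s \<in> asgs A (insert x V)
      then marg A V (V - {x}) X (s |` (V - {x})) / real (card A) else 0)"

definition weight :: "nat set \<Rightarrow> nat set \<Rightarrow> pteam \<Rightarrow> nat list \<Rightarrow> nat list \<Rightarrow> real" where
  "weight A V X ys b = (\<Sum>s\<in>{s\<in>asgs A V. map s ys = map Some b}. X s)"

primrec fo_sat :: "rstruc \<Rightarrow> fo \<Rightarrow> nat set \<Rightarrow> pteam \<Rightarrow> bool" where
  "fo_sat M (FEq x y) V X = (\<forall>s\<in>asgs (univ M) V. X s > 0 \<longrightarrow> s x = s y)"
| "fo_sat M (FNeq x y) V X = (\<forall>s\<in>asgs (univ M) V. X s > 0 \<longrightarrow> s x \<noteq> s y)"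
| "fo_sat M (FRel R xs) V X =
     (\<forall>s\<in>asgs (univ M) V. X s > 0 \<longrightarrow> map (the \<circ> s) xs \<in> rel M R)"
| "fo_sat M (FNRel R xs) V X =
     (\<forall>s\<in>asgs (univ M) V. X s > 0 \<longrightarrow> map (the \<circ> s) xs \<notin> rel M R)"
| "fo_sat M (FAnd p q) V X = (fo_sat M p V X \<and> fo_sat M q V X)"
| "fo_sat M (FOr p q) V X =
     (\<exists>Y Z \<alpha>. is_pteam (univ M) V Y \<and> is_pteam (univ M) V Z \<and> 0 \<le> \<alpha> \<and> \<alpha> \<le> 1 \<and>
        (\<forall>s. X s = \<alpha> * Y s + (1 - \<alpha>) * Z s) \<and> fo_sat M p V Y \<and> fo_sat M q V Z)"
| "fo_sat M (FEx x p) V X =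
     (\<exists>Y. is_pteam (univ M) (insert x V) Y \<and>
        marg (univ M) (insert x V) (V - {x}) Y = marg (univ M) V (V - {x}) X \<and>
        fo_sat M p (insert x V) Y)"
| "fo_sat M (FAll x p) V X = fo_sat M p (insert x V) (sup_team (univ M) V x X)"
| "fo_sat M (FInd ys zs) V X =
     (\<forall>b c. length b = length ys \<longrightarrow> length c = length zs \<longrightarrow>
        weight (univ M) V X ys b * weight (univ M) V X zs c =
        weight (univ M) V X (ys @ zs) (b @ c) * (\<Sum>s\<in>asgs (univ M) V. X s))"

text \<open>The probabilistic team X with f_X = f^M, over the variables xs (in this order).\<close>
definition team_of :: "rstruc \<Rightarrow> nat list \<Rightarrow> pteam" where
  "team_of M xs = (\<lambda>s. if s \<in> asgs (univ M) (set xs) then fval M (map (the \<circ> s) xs) else 0)"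

definition Struc_FO :: "sym set \<Rightarrow> nat list \<Rightarrow> fo \<Rightarrow> rstruc set" where
  "Struc_FO tau xs phi = {M. is_dstruc tau (length xs) M \<and>
      fo_sat M phi (set xs) (team_of M xs)}"

datatype numop = OPlus | OTimes | OSum
datatype cmpop = CEq | CLt | CLe

datatype nterm =
    NConst real
  | NApp sym "nat list"          \<comment> \<open>function symbol / function variable applied\<close>
  | NAdd nterm nterm
  | NMul nterm nterm
  | NSum "nat list" nterm

datatype eso =
    EEq nat nat | ENeq nat nat
  | ECmp cmpop nterm nterm | ENCmp cmpop nterm nterm
  | ERel sym "nat list" | ENRel sym "nat list"
  | EAnd eso eso | EOr eso eso
  | EEx nat eso | EAll nat eso
  | EExF sym eso

primrec nt_ops :: "nterm \<Rightarrow> numop set" where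
  "nt_ops (NConst c) = {}"
| "nt_ops (NApp g xs) = {}"
| "nt_ops (NAdd i j) = insert OPlus (nt_ops i \<union> nt_ops j)"
| "nt_ops (NMul i j) = insert OTimes (nt_ops i \<union> nt_ops j)"
| "nt_ops (NSum ys i) = insert OSum (nt_ops i)"

primrec nt_consts :: "nterm \<Rightarrow> real set" where
  "nt_consts (NConst c) = {c}"
| "nt_consts (NApp g xs) = {}"
| "nt_consts (NAdd i j) = nt_consts i \<union> nt_consts j"
| "nt_consts (NMul i j) = nt_consts i \<union> nt_consts j"
| "nt_consts (NSum ys i) = nt_consts i"

primrec nt_fv :: "nterm \<Rightarrow> nat set" where
  "nt_fv (NConst c) = {}"
| "nt_fv (NApp g xs) = set xs"
| "nt_fv (NAdd i j) = nt_fv i \<union> nt_fv j"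
| "nt_fv (NMul i j) = nt_fv i \<union> nt_fv j"
| "nt_fv (NSum ys i) = nt_fv i - set ys"

primrec nt_ffv :: "nterm \<Rightarrow> sym set" where
  "nt_ffv (NConst c) = {}"
| "nt_ffv (NApp g xs) = {g}"
| "nt_ffv (NAdd i j) = nt_ffv i \<union> nt_ffv j"
| "nt_ffv (NMul i j) = nt_ffv i \<union> nt_ffv j"
| "nt_ffv (NSum ys i) = nt_ffv i"

primrec nt_wf :: "nterm \<Rightarrow> bool" where
  "nt_wf (NConst c) = True"
| "nt_wf (NApp g xs) = (length xs = snd g)"
| "nt_wf (NAdd i j) = (nt_wf i \<and> nt_wf j)"
| "nt_wf (NMul i j) = (nt_wf i \<and> nt_wf j)"
| "nt_wf (NSum ys i) = (distinct ys \<and> nt_wf i)"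

text \<open>Fragment ESO_R[O,E,C]: operations in O, comparisons in E, constants in C.\<close>
primrec in_frag :: "numop set \<Rightarrow> cmpop set \<Rightarrow> real set \<Rightarrow> eso \<Rightarrow> bool" where
  "in_frag Ops E C (EEq x y) = True"
| "in_frag Ops E C (ENeq x y) = True"
| "in_frag Ops E C (ECmp e i j) = (e \<in> E \<and> nt_ops i \<union> nt_ops j \<subseteq> Ops \<and> nt_consts i \<union> nt_consts j \<subseteq> C)"
| "in_frag Ops E C (ENCmp e i j) = (e \<in> E \<and> nt_ops i \<union> nt_ops j \<subseteq> Ops \<and> nt_consts i \<union> nt_consts j \<subseteq> C)"
| "in_frag Ops E C (ERel R xs) = True"
| "in_frag Ops E C (ENRel R xs) = True"
| "in_frag Ops E C (EAnd p q) = (in_frag Ops E C p \<and> in_frag Ops E C q)"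
| "in_frag Ops E C (EOr p q) = (in_frag Ops E C p \<and> in_frag Ops E C q)"
| "in_frag Ops E C (EEx x p) = in_frag Ops E C p"
| "in_frag Ops E C (EAll x p) = in_frag Ops E C p"
| "in_frag Ops E C (EExF g p) = in_frag Ops E C p"

primrec eso_fv :: "eso \<Rightarrow> nat set" where
  "eso_fv (EEq x y) = {x, y}"
| "eso_fv (ENeq x y) = {x, y}"
| "eso_fv (ECmp e i j) = nt_fv i \<union> nt_fv j"
| "eso_fv (ENCmp e i j) = nt_fv i \<union> nt_fv j"
| "eso_fv (ERel R xs) = set xs"
| "eso_fv (ENRel R xs) = set xs"
| "eso_fv (EAnd p q) = eso_fv p \<union> eso_fv q"
| "eso_fv (EOr p q) = eso_fv p \<union> eso_fv q"
| "eso_fv (EEx x p) = eso_fv p - {x}"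
| "eso_fv (EAll x p) = eso_fv p - {x}"
| "eso_fv (EExF g p) = eso_fv p"

primrec eso_ffv :: "eso \<Rightarrow> sym set" where
  "eso_ffv (EEq x y) = {}"
| "eso_ffv (ENeq x y) = {}"
| "eso_ffv (ECmp e i j) = nt_ffv i \<union> nt_ffv j"
| "eso_ffv (ENCmp e i j) = nt_ffv i \<union> nt_ffv j"
| "eso_ffv (ERel R xs) = {}"
| "eso_ffv (ENRel R xs) = {}"
| "eso_ffv (EAnd p q) = eso_ffv p \<union> eso_ffv q"
| "eso_ffv (EOr p q) = eso_ffv p \<union> eso_ffv q"
| "eso_ffv (EEx x p) = eso_ffv p"
| "eso_ffv (EAll x p) = eso_ffv p"
| "eso_ffv (EExF g p) = eso_ffv p - {g}"

primrec eso_wf :: "sym set \<Rightarrow> eso \<Rightarrow> bool" where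
  "eso_wf tau (EEq x y) = True"
| "eso_wf tau (ENeq x y) = True"
| "eso_wf tau (ECmp e i j) = (nt_wf i \<and> nt_wf j)"
| "eso_wf tau (ENCmp e i j) = (nt_wf i \<and> nt_wf j)"
| "eso_wf tau (ERel R xs) = (R \<in> tau \<and> length xs = snd R)"
| "eso_wf tau (ENRel R xs) = (R \<in> tau \<and> length xs = snd R)"
| "eso_wf tau (EAnd p q) = (eso_wf tau p \<and> eso_wf tau q)"
| "eso_wf tau (EOr p q) = (eso_wf tau p \<and> eso_wf tau q)"
| "eso_wf tau (EEx x p) = eso_wf tau p"
| "eso_wf tau (EAll x p) = eso_wf tau p"
| "eso_wf tau (EExF g p) = eso_wf tau p"

definition upds :: "(nat \<Rightarrow> nat) \<Rightarrow> nat list \<Rightarrow> nat list \<Rightarrow> (nat \<Rightarrow> nat)" where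
  "upds s ys l = foldl (\<lambda>t (y, a). t(y := a)) s (zip ys l)"

primrec nt_eval :: "nat set \<Rightarrow> (sym \<Rightarrow> nat list \<Rightarrow> real) \<Rightarrow> (nat \<Rightarrow> nat) \<Rightarrow> nterm \<Rightarrow> real" where
  "nt_eval A F s (NConst c) = c"
| "nt_eval A F s (NApp g xs) = F g (map s xs)"
| "nt_eval A F s (NAdd i j) = nt_eval A F s i + nt_eval A F s j"
| "nt_eval A F s (NMul i j) = nt_eval A F s i * nt_eval A F s j"
| "nt_eval A F s (NSum ys i) = (\<Sum>l\<in>tuples (length ys) A. nt_eval A F (upds s ys l) i)"

fun cmp_eval :: "cmpop \<Rightarrow> real \<Rightarrow> real \<Rightarrow> bool" where
  "cmp_eval CEq a b = (a = b)"
| "cmp_eval CLt a b = (a < b)"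
| "cmp_eval CLe a b = (a \<le> b)"

primrec eso_sat :: "rstruc \<Rightarrow> (sym \<Rightarrow> nat list \<Rightarrow> real) \<Rightarrow> (nat \<Rightarrow> nat) \<Rightarrow> eso \<Rightarrow> bool" where
  "eso_sat M F s (EEq x y) = (s x = s y)"
| "eso_sat M F s (ENeq x y) = (s x \<noteq> s y)"
| "eso_sat M F s (ECmp e i j) = cmp_eval e (nt_eval (univ M) F s i) (nt_eval (univ M) F s j)"
| "eso_sat M F s (ENCmp e i j) = (\<not> cmp_eval e (nt_eval (univ M) F s i) (nt_eval (univ M) F s j))"
| "eso_sat M F s (ERel R xs) = (map s xs \<in> rel M R)"
| "eso_sat M F s (ENRel R xs) = (map s xs \<notin> rel M R)"
| "eso_sat M F s (EAnd p q) = (eso_sat M F s p \<and> eso_sat M F s q)"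
| "eso_sat M F s (EOr p q) = (eso_sat M F s p \<or> eso_sat M F s q)"
| "eso_sat M F s (EEx x p) = (\<exists>a\<in>univ M. eso_sat M F (s(x := a)) p)"
| "eso_sat M F s (EAll x p) = (\<forall>a\<in>univ M. eso_sat M F (s(x := a)) p)"
| "eso_sat M F s (EExF g p) =
     (\<exists>h. (\<forall>l. l \<notin> tuples (snd g) (univ M) \<longrightarrow> h l = 0) \<and> eso_sat M (F(g := h)) s p)"

definition Struc_ESO :: "sym set \<Rightarrow> sym \<Rightarrow> eso \<Rightarrow> rstruc set" where
  "Struc_ESO tau f psi = {M. is_dstruc tau (snd f) M \<and>
      eso_sat M (\<lambda>g. if g = f then fval M else (\<lambda>_. 0)) (\<lambda>_. 0) psi}"

end

theory Submission
  imports Defs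
begin


locale addi =
  fixes \<pi> :: "real \<Rightarrow> real"
  assumes padd: "\<And>x y. \<pi> (x + y) = \<pi> x + \<pi> y" and p1: "\<pi> 1 = 0"
begin

lemma p0[simp]: "\<pi> 0 = 0" using padd[of 0 0] by simp
lemma pminus: "\<pi> (- x) = - \<pi> x" using padd[of x "-x"] by simp
lemma pdiff: "\<pi> (x - y) = \<pi> x - \<pi> y" using padd[of x "-y"] pminus[of y] by simp
lemma psum: "\<pi> (sum g S) = (\<Sum>x\<in>S. \<pi> (g x))"
  by (induction S rule: infinite_finite_induct) (auto simp: padd)

definition H :: "real \<Rightarrow> real \<Rightarrow> real" where "H d x = x + d * \<pi> x"

lemma H_add: "H d (x + y) = H d x + H d y" by (simp add: H_def padd algebra_simps)
lemma H0[simp]: "H d 0 = 0" by (simp add: H_def)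
lemma H1[simp]: "H d 1 = 1" by (simp add: H_def p1)
lemma H_sum: "H d (sum g S) = (\<Sum>x\<in>S. H d (g x))"
  by (simp add: H_def psum sum.distrib sum_distrib_left)

lemma nt_H:
  assumes "nt_ops i \<subseteq> {OPlus}" "nt_consts i \<subseteq> {0,1}"
  shows "nt_eval A (\<lambda>g l. H d (F g l)) s i = H d (nt_eval A F s i)"
  using assms by (induction i) (auto simp: H_add)

lemma sgn_stable:
  fixes u w :: real
  assumes "u = 0 \<Longrightarrow> w = 0"
  shows "\<exists>e>0. \<forall>d. \<bar>d\<bar> < e \<longrightarrow> sgn (u + d * w) = sgn u"
proof (cases "u = 0")
  case True then show ?thesis using assms by (intro exI[of _ 1]) auto
next
  case False
  define e where "e = \<bar>u\<bar> / (\<bar>w\<bar> + 1)"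
  have e: "e > 0" using False by (simp add: e_def)
  have "sgn (u + d * w) = sgn u" if "\<bar>d\<bar> < e" for d
  proof -
    have "\<bar>d * w\<bar> \<le> e * \<bar>w\<bar>" using that by (simp add: abs_mult mult_right_mono)
    also have "e * \<bar>w\<bar> < \<bar>u\<bar>"
    proof -
      have "e * \<bar>w\<bar> = \<bar>u\<bar> * (\<bar>w\<bar> / (\<bar>w\<bar> + 1))" by (simp add: e_def)
      also have "\<dots> < \<bar>u\<bar> * 1" using False by (intro mult_strict_left_mono) auto
      finally show ?thesis by simp
    qed
    finally have "\<bar>d * w\<bar> < \<bar>u\<bar>" .
    then show ?thesis by (cases "u > 0") (auto simp: sgn_if abs_if split: if_splits)
  qed
  then show ?thesis using e by blast
qed

lemma cmp_sgn: "sgn (b - a) = sgn (b' - a') \<Longrightarrow> cmp_eval e a b = cmp_eval e a' b'"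
  by (cases e) (auto simp: sgn_if split: if_splits)

lemma cmp_stable:
  "\<exists>e>0. \<forall>d. \<bar>d\<bar> < e \<longrightarrow> cmp_eval c (H d a) (H d b) = cmp_eval c a b"
proof -
  obtain e where e: "e > 0" "\<forall>d. \<bar>d\<bar> < e \<longrightarrow> sgn ((b - a) + d * (\<pi> b - \<pi> a)) = sgn (b - a)"
    using sgn_stable[of "b - a" "\<pi> b - \<pi> a"] by auto
  have "H d b - H d a = (b - a) + d * (\<pi> b - \<pi> a)" for d by (simp add: H_def algebra_simps)
  then show ?thesis using e by (intro exI[of _ e]) (auto intro!: cmp_sgn)
qed

lemma fin_min:
  fixes P :: "'a \<Rightarrow> real \<Rightarrow> bool"
  assumes "finite U" "\<forall>a\<in>U. \<exists>e>0. P a e" "\<And>a e e'. P a e \<Longrightarrow> e' \<le> e \<Longrightarrow> P a e'"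
  shows "\<exists>e>0. \<forall>a\<in>U. P a e"
proof -
  obtain E where E: "\<forall>a\<in>U. E a > 0 \<and> P a (E a)" using assms(2) by metis
  define e where "e = Min (insert 1 (E ` U))"
  have "e > 0" using assms(1) E by (simp add: e_def)
  moreover have "e \<le> E a" if "a \<in> U" for a using assms(1) that by (simp add: e_def)
  ultimately show ?thesis using E assms(3) by blast
qed

lemma pres:
  assumes "finite (univ M)" "in_frag {OPlus} {CLe} {0,1} psi" "eso_sat M F s psi"
  shows "\<exists>e>0. \<forall>d. \<bar>d\<bar> < e \<longrightarrow> eso_sat M (\<lambda>g l. H d (F g l)) s psi"
  using assms(2,3)
proof (induction psi arbitrary: F s)
  case (ECmp c i j)
  obtain e where "e > 0" "\<forall>d. \<bar>d\<bar> < e \<longrightarrow> cmp_eval c (H d (nt_eval (univ M) F s i)) (H d (nt_eval (univ M) F s j))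
     = cmp_eval c (nt_eval (univ M) F s i) (nt_eval (univ M) F s j)"
    using cmp_stable by blast
  then show ?case using ECmp by (intro exI[of _ e]) (auto simp: nt_H)
next
  case (ENCmp c i j)
  obtain e where "e > 0" "\<forall>d. \<bar>d\<bar> < e \<longrightarrow> cmp_eval c (H d (nt_eval (univ M) F s i)) (H d (nt_eval (univ M) F s j))
     = cmp_eval c (nt_eval (univ M) F s i) (nt_eval (univ M) F s j)"
    using cmp_stable by blast
  then show ?case using ENCmp by (intro exI[of _ e]) (auto simp: nt_H)
next
  case (EAnd p q)
  then obtain e1 e2 where "e1 > 0" "e2 > 0"
    "\<forall>d. \<bar>d\<bar> < e1 \<longrightarrow> eso_sat M (\<lambda>g l. H d (F g l)) s p"
    "\<forall>d. \<bar>d\<bar> < e2 \<longrightarrow> eso_sat M (\<lambda>g l. H d (F g l)) s q" by auto metis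
  then show ?case by (intro exI[of _ "min e1 e2"]) auto
next
  case (EOr p q)
  then show ?case by (auto, metis, metis)
next
  case (EEx x p)
  from EEx.prems obtain a where a: "a \<in> univ M" and sa: "eso_sat M F (s(x := a)) p" by auto
  have fr: "in_frag {OPlus} {CLe} {0,1} p" using EEx.prems by simp
  from EEx.IH[OF fr sa] obtain e where
    "e > 0" "\<forall>d. \<bar>d\<bar> < e \<longrightarrow> eso_sat M (\<lambda>g l. H d (F g l)) (s(x := a)) p" by blast
  with a show ?case by (intro exI[of _ e]) auto
next
  case (EAll x p)
  have "\<forall>a\<in>univ M. \<exists>e>0. \<forall>d. \<bar>d\<bar> < e \<longrightarrow> eso_sat M (\<lambda>g l. H d (F g l)) (s(x := a)) p"
    using EAll by auto
  then have "\<exists>e>0. \<forall>a\<in>univ M. \<forall>d. \<bar>d\<bar> < e \<longrightarrow> eso_sat M (\<lambda>g l. H d (F g l)) (s(x := a)) p"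
    by (rule fin_min[OF assms(1)]) auto
  then show ?case by auto
next
  case (EExF g p)
  then obtain h where h: "\<forall>l. l \<notin> tuples (snd g) (univ M) \<longrightarrow> h l = 0" "eso_sat M (F(g := h)) s p" by auto
  have fr: "in_frag {OPlus} {CLe} {0,1} p" using EExF.prems by simp
  from EExF.IH[OF fr h(2)] obtain e where e: "e > 0"
    "\<forall>d. \<bar>d\<bar> < e \<longrightarrow> eso_sat M (\<lambda>g' l. H d ((F(g := h)) g' l)) s p" by blast
  have eq: "(\<lambda>g' l. H d ((F(g := h)) g' l)) = (\<lambda>g l. H d (F g l))(g := (\<lambda>l. H d (h l)))" for d
    by (auto simp: fun_eq_iff)
  show ?case
  proof (intro exI[of _ e] conjI allI impI)
    fix d :: real assume d: "\<bar>d\<bar> < e"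
    have "eso_sat M ((\<lambda>g l. H d (F g l))(g := (\<lambda>l. H d (h l)))) s p"
      using e(2) d unfolding eq by blast
    moreover have "\<forall>l. l \<notin> tuples (snd g) (univ M) \<longrightarrow> H d (h l) = 0" using h(1) by simp
    ultimately show "eso_sat M (\<lambda>g l. H d (F g l)) s (EExF g p)" by auto
  qed (use e in auto)
qed (auto intro: exI[of _ "1::real"])

end


lemma asg01_in: "a \<in> A \<Longrightarrow> b \<in> A \<Longrightarrow> [0\<mapsto>a, 1\<mapsto>b] \<in> asgs A {0::nat,1}"
  unfolding asgs_def ran_def by auto

lemma asgs01: "asgs A {0,1} = (\<lambda>(a,b). [0\<mapsto>a, 1\<mapsto>b]) ` (A \<times> A)"
proof (rule set_eqI, rule iffI)
  fix s :: asg assume "s \<in> asgs A {0,1}"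
  then have d: "dom s = {0,1}" and r: "ran s \<subseteq> A" by (auto simp: asgs_def)
  obtain a where a: "s 0 = Some a" using d by auto
  obtain b where b: "s 1 = Some b" using d by auto
  have "a \<in> A" "b \<in> A" using a b r by (meson ranI subsetD)+
  moreover have "s = [0\<mapsto>a, 1\<mapsto>b]"
  proof
    fix n
    have o: "n \<noteq> 0 \<Longrightarrow> n \<noteq> 1 \<Longrightarrow> s n = None" using d by (metis domIff insert_iff singletonD)
    show "s n = [0\<mapsto>a, 1\<mapsto>b] n"
    proof (cases "n = 0")
      case True then show ?thesis using a by simp
    next
      case False
      show ?thesis
      proof (cases "n = 1")
        case True then show ?thesis using b by simp
      next
        case F2: False then show ?thesis using o[OF False F2] False by simp
      qed
    qed
  qed
  ultimately show "s \<in> (\<lambda>(a,b). [0\<mapsto>a, 1\<mapsto>b]) ` (A \<times> A)"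
    by (intro image_eqI[of _ _ "(a,b)"]) auto
next
  fix s :: asg assume "s \<in> (\<lambda>(a,b). [0\<mapsto>a, 1\<mapsto>b]) ` (A \<times> A)"
  then show "s \<in> asgs A {0,1}" using asg01_in by auto
qed

lemma inj01: "inj_on (\<lambda>(a,b). [0::nat\<mapsto>a::nat, 1\<mapsto>b]) X"
proof (rule inj_onI, clarify)
  fix a b c d :: nat assume "[0::nat\<mapsto>a, 1\<mapsto>b] = [0\<mapsto>c, 1\<mapsto>d]"
  from fun_cong[OF this, of 0] fun_cong[OF this, of 1] show "a = c \<and> b = d" by simp
qed

lemma sum_asgs01: "finite A \<Longrightarrow> (\<Sum>s\<in>asgs A {0,1}. G s) = (\<Sum>a\<in>A. \<Sum>b\<in>A. G [0\<mapsto>a, 1\<mapsto>b])"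
proof -
  assume fA: "finite A"
  have "(\<Sum>s\<in>asgs A {0,1}. G s) = (\<Sum>x\<in>A \<times> A. G ((\<lambda>(a,b). [0\<mapsto>a, 1\<mapsto>b]) x))"
    unfolding asgs01 by (rule sum.reindex[OF inj01, unfolded comp_def])
  also have "\<dots> = (\<Sum>(a,b)\<in>A \<times> A. G [0\<mapsto>a, 1\<mapsto>b])" by (rule sum.cong) auto
  also have "\<dots> = (\<Sum>a\<in>A. \<Sum>b\<in>A. G [0\<mapsto>a, 1\<mapsto>b])" by (rule sum.cartesian_product[symmetric])
  finally show ?thesis .
qed

lemma fin_asgs01: "finite A \<Longrightarrow> finite (asgs A {0,1})"
  unfolding asgs01 by simp

lemma tuples2: "tuples 2 A = (\<lambda>(a,b). [a,b]) ` (A \<times> A)"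
proof (rule set_eqI, rule iffI)
  fix l assume "l \<in> tuples 2 A"
  then have "length l = 2" "set l \<subseteq> A" by (auto simp: tuples_def)
  then obtain a b where "l = [a,b]" "a \<in> A" "b \<in> A"
    by (cases l; cases "tl l") (auto simp: numeral_2_eq_2)
  then show "l \<in> (\<lambda>(a,b). [a,b]) ` (A \<times> A)" by (intro image_eqI[of _ _ "(a,b)"]) auto
qed (auto simp: tuples_def)

lemma sum_tuples2: "(\<Sum>l\<in>tuples 2 A. G l) = (\<Sum>a\<in>A. \<Sum>b\<in>A. G [a,b])"
proof -
  have "inj_on (\<lambda>(a,b). [a,b]) (A \<times> A)" by (auto simp: inj_on_def)
  then have "(\<Sum>l\<in>tuples 2 A. G l) = (\<Sum>x\<in>A \<times> A. G ((\<lambda>(a,b). [a,b]) x))"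
    unfolding tuples2 by (rule sum.reindex[unfolded comp_def])
  also have "\<dots> = (\<Sum>(a,b)\<in>A \<times> A. G [a,b])" by (rule sum.cong) auto
  also have "\<dots> = (\<Sum>a\<in>A. \<Sum>b\<in>A. G [a,b])" by (rule sum.cartesian_product[symmetric])
  finally show ?thesis .
qed

lemma weight01: "finite A \<Longrightarrow> weight A {0,1} X ys b =
   (\<Sum>a\<in>A. \<Sum>c\<in>A. if map [0\<mapsto>a, 1\<mapsto>c] ys = map Some b then X [0\<mapsto>a, 1\<mapsto>c] else 0)"
  unfolding weight_def by (subst sum.inter_filter[OF fin_asgs01], assumption, subst sum_asgs01, assumption, rule refl)

lemma eso_sat_fval: "eso_sat (M\<lparr>fval := g\<rparr>) F s psi = eso_sat M F s psi"
  by (induction psi arbitrary: F s) simp_all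



lemma sqrt2_irr: "sqrt 2 \<notin> \<rat>"
proof
  assume "sqrt 2 \<in> \<rat>"
  then obtain m n :: nat where n: "n \<noteq> 0" and r: "\<bar>sqrt 2\<bar> = m / n" and cp: "coprime m n"
    by (rule Rats_abs_nat_div_natE)
  from n r have "real m = sqrt 2 * n" by simp
  then have "real (m^2) = 2 * real (n^2)" by (simp add: power_mult_distrib)
  then have eq: "m^2 = 2 * n^2" by linarith
  then have "even (m^2)" by simp
  then have "even m" by simp
  then obtain k where k: "m = 2 * k" by blast
  with eq have "n^2 = 2 * k^2" by (simp add: power_mult_distrib)
  then have "even (n^2)" by simp
  then have "even n" by simp
  with \<open>even m\<close> cp have "2 = (1::nat)" using coprime_common_divisor_nat[OF cp] by blast
  then show False by simp
qed

definition qs :: "rat \<Rightarrow> real \<Rightarrow> real" where "qs r x = of_rat r * x"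

interpretation QR: vector_space_pair qs qs
  by unfold_locales (auto simp: qs_def algebra_simps of_rat_add of_rat_mult)

lemma exists_pi: "\<exists>\<pi>::real\<Rightarrow>real. (\<forall>x y. \<pi> (x + y) = \<pi> x + \<pi> y) \<and> \<pi> 1 = 0 \<and> \<pi> (sqrt 2 / 2) = 1"
proof -
  let ?p = "sqrt 2 / 2"
  have i1: "QR.vs1.independent {1::real}"
    by (rule QR.vs1.independent_insertI) (use QR.vs1.independent_empty in auto)
  have "?p \<notin> QR.vs1.span {1}"
  proof
    assume "?p \<in> QR.vs1.span {1}"
    then obtain k where "?p = of_rat k" by (auto simp: QR.vs1.span_singleton qs_def)
    then have "sqrt 2 = of_rat (2*k)" by (simp add: of_rat_mult)
    then show False using sqrt2_irr by (metis Rats_of_rat)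
  qed
  then have ind: "QR.vs1.independent {?p, 1}" using i1 by (rule QR.vs1.independent_insertI)
  define g :: "real \<Rightarrow> real" where "g = (\<lambda>b. if b = 1 then 0 else 1)"
  define \<pi> where "\<pi> = QR.construct {?p, 1} g"
  interpret L: Vector_Spaces.linear qs qs \<pi> unfolding \<pi>_def by (rule QR.linear_construct[OF ind])
  have p1: "?p \<noteq> 1" by (metis \<open>?p \<notin> QR.vs1.span {1}\<close> QR.vs1.span_base singletonI)
  have "\<pi> 1 = 0" unfolding \<pi>_def using QR.construct_basis[OF ind, of 1 g] by (simp add: g_def)
  moreover have "\<pi> ?p = 1" unfolding \<pi>_def using QR.construct_basis[OF ind, of ?p g] p1 by (simp add: g_def)
  ultimately show ?thesis using L.add by blast
qed

theorem mainTheorem18: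
  shows "\<exists>tau phi xs. finite tau \<and> fo_wf tau phi \<and> distinct xs \<and> set xs = fo_fv phi \<and>
     (\<forall>psi f. eso_wf tau psi \<and> in_frag {OPlus} {CLe} {0, 1} psi \<and>
        snd f = length xs \<and> eso_ffv psi \<subseteq> {f} \<and> eso_fv psi = {} \<longrightarrow>
        Struc_FO tau xs phi \<noteq> Struc_ESO tau f psi)"
proof -
  have main: "Struc_FO {} [0,1] (FInd [0] [1]) \<noteq> Struc_ESO {} f psi"
    if asm: "in_frag {OPlus} {CLe} {0, 1} psi \<and> snd f = length [0::nat,1]" for psi f
  proof -
  from asm have frag: "in_frag {OPlus} {CLe} {0, 1} psi" and sf: "snd f = 2" by auto
  obtain \<pi> :: "real \<Rightarrow> real" where \<pi>: "\<forall>x y. \<pi> (x + y) = \<pi> x + \<pi> y" "\<pi> 1 = 0" "\<pi> (sqrt 2 / 2) = 1"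
    using exists_pi by blast
  interpret addi \<pi> using \<pi> by unfold_locales auto
  define p where "p = sqrt 2 / 2"
  have pp: "p * p = 1/2" unfolding p_def by (simp add: field_simps)
  have "1.4 < sqrt 2" by (rule real_less_rsqrt) (simp add: power2_eq_square)
  then have plo: "p > 7/10" unfolding p_def by simp
  have "sqrt 2 < 1.44" by (rule real_less_lsqrt) (simp_all add: power2_eq_square)
  then have phi: "p < 18/25" unfolding p_def by simp
  have pip: "\<pi> p = 1" unfolding p_def by (rule \<pi>(3))
  have pihalf: "\<pi> (1/2) = 0" using padd[of "1/2" "1/2"] p1 by simp
  define P where "P = (\<lambda>a::nat. if a = 0 then p else if a = 1 then 1 - p else 0)"
  define fM where "fM = (\<lambda>l::nat list. if length l = 2 then P (l!0) * P (l!1) else 0)"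
  define M where "M = \<lparr>univ = {0::nat,1}, rel = (\<lambda>_::sym. {}::nat list set), fval = fM\<rparr>"
  have P01: "P 0 + P 1 = 1" by (simp add: P_def)
  have Pnn: "P a \<ge> 0" for a using plo phi by (simp add: P_def)
  have uM: "univ M = {0,1}" by (simp add: M_def)
  define X where "X = team_of M [0,1]"
  have Xab: "X [0\<mapsto>a, 1\<mapsto>b] = P a * P b" if "a \<in> {0,1}" "b \<in> {0,1}" for a b
    using that asg01_in[of a "{0,1}" b] by (auto simp: X_def team_of_def M_def fM_def)
  have Xab': "X [0\<mapsto>a, Suc 0\<mapsto>b] = P a * P b" if "a \<in> {0,1}" "b \<in> {0,1}" for a b
    using Xab[OF that] by simp
  have X4: "X [0\<mapsto>0, Suc 0\<mapsto>0] = P 0 * P 0" "X [0\<mapsto>0, Suc 0\<mapsto>Suc 0] = P 0 * P 1"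
    "X [0\<mapsto>Suc 0, Suc 0\<mapsto>0] = P 1 * P 0" "X [0\<mapsto>Suc 0, Suc 0\<mapsto>Suc 0] = P 1 * P 1"
    using Xab'[of 0 0] Xab'[of 0 1] Xab'[of 1 0] Xab'[of 1 1] by simp_all
  have wexp: "weight {0::nat,1} {0,1} Y ys b = (\<Sum>a\<in>{0,1}. \<Sum>c\<in>{0,1}.
      if map [0\<mapsto>a, 1\<mapsto>c] ys = map Some b then Y [0\<mapsto>a, 1\<mapsto>c] else 0)" for Y ys b
    by (rule weight01) simp
  have sexp: "(\<Sum>s\<in>asgs {0::nat,1} {0,1}. Y s) = (\<Sum>a\<in>{0,1}. \<Sum>c\<in>{0,1}. Y [0\<mapsto>a, 1\<mapsto>c])" for Y
    by (rule sum_asgs01) simp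
  have wx: "weight {0,1} {0,1} X [0] [u] = P u" for u
    using P01 unfolding wexp by (simp add: X4) (auto simp: X4 P_def algebra_simps)
  have wy: "weight {0,1} {0,1} X [1] [u] = P u" for u
    using P01 unfolding wexp by (simp add: X4) (auto simp: X4 P_def algebra_simps)
  have wxy: "weight {0,1} {0,1} X [0,1] [u,v] = P u * P v" for u v
    unfolding wexp by (simp add: X4) (auto simp: X4 P_def)
  have tot: "(\<Sum>s\<in>asgs {0,1} {0,1}. X s) = 1"
    using P01 unfolding sexp by (simp add: X4) (simp add: X4 P_def algebra_simps pp)
  have sumfM: "(\<Sum>l\<in>tuples 2 {0,1}. fM l) = 1"
    using P01 by (simp add: sum_tuples2 fM_def) (simp add: X4 P_def algebra_simps pp)
  have fM_out: "fM l = 0" if "l \<notin> tuples 2 {0,1}" for l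
  proof (cases "length l = 2")
    case True
    then obtain a b where l: "l = [a,b]" by (cases l; cases "tl l") (auto simp: numeral_2_eq_2)
    with that have "a \<notin> {0,1} \<or> b \<notin> {0,1}" by (auto simp: tuples_def)
    then show ?thesis by (auto simp: l fM_def P_def)
  qed (simp add: fM_def)
  have dM: "is_dstruc {} 2 M"
    unfolding is_dstruc_def using sumfM fM_out Pnn
    by (auto simp: M_def fM_def intro!: mult_nonneg_nonneg)
  have "M \<in> Struc_FO {} [0,1] (FInd [0] [1])"
  proof -
    have "fo_sat M (FInd [0] [1]) {0,1} X"
    proof (simp only: fo_sat.simps uM, intro allI impI)
      fix b c :: "nat list" assume "length b = length [0::nat]" "length c = length [1::nat]"
      then obtain u v where "b = [u]" "c = [v]" by (auto simp: length_Suc_conv)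
      then show "weight {0,1} {0,1} X [0] b * weight {0,1} {0,1} X [1] c =
        weight {0,1} {0,1} X ([0] @ [1]) (b @ c) * (\<Sum>s\<in>asgs {0,1} {0,1}. X s)"
        using wx[of u] wy[of v] wxy[of u v] tot by simp
    qed
    then show ?thesis using dM by (simp add: Struc_FO_def X_def numeral_2_eq_2)
  qed
  show "Struc_FO {} [0,1] (FInd [0] [1]) \<noteq> Struc_ESO {} f psi"
  proof
    assume eq: "Struc_FO {} [0,1] (FInd [0] [1]) = Struc_ESO {} f psi"
    have "M \<in> Struc_ESO {} f psi" using eq \<open>M \<in> Struc_FO {} [0,1] (FInd [0] [1])\<close> by simp
    then have sM: "eso_sat M (\<lambda>g. if g = f then fval M else (\<lambda>_. 0)) (\<lambda>_. 0) psi"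
      by (simp add: Struc_ESO_def)
    obtain e where e: "e > 0"
      "\<forall>d. \<bar>d\<bar> < e \<longrightarrow> eso_sat M (\<lambda>g l. H d ((\<lambda>g. if g = f then fval M else (\<lambda>_. 0)) g l)) (\<lambda>_. 0) psi"
      using pres[OF _ frag sM] uM by auto
    define d where "d = min e (1/100) / 2"
    have d: "d > 0" "d < e" "d < 1/100" using e(1) by (auto simp: d_def)
    define fM' where "fM' = (\<lambda>l. H d (fM l))"
    define M' where "M' = M\<lparr>fval := fM'\<rparr>"
    have uM': "univ M' = {0,1}" by (simp add: M'_def M_def)
    have Feq: "(\<lambda>g l. H d ((\<lambda>g. if g = f then fval M else (\<lambda>_. 0)) g l)) =
        (\<lambda>g. if g = f then fval M' else (\<lambda>_. 0))"
      by (auto simp: fun_eq_iff M'_def fM'_def M_def)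
    have sM': "eso_sat M' (\<lambda>g. if g = f then fval M' else (\<lambda>_. 0)) (\<lambda>_. 0) psi"
    proof -
      have "eso_sat M (\<lambda>g l. H d ((\<lambda>g. if g = f then fval M else (\<lambda>_. 0)) g l)) (\<lambda>_. 0) psi"
        using e(2) d(1,2) by auto
      then have "eso_sat M (\<lambda>g. if g = f then fval M' else (\<lambda>_. 0)) (\<lambda>_. 0) psi" by (simp only: Feq)
      moreover have "eso_sat M' G t psi = eso_sat M G t psi" for G t by (simp add: M'_def eso_sat_fval)
      ultimately show ?thesis by simp
    qed
    have h1: "H d (1/2) = 1/2" by (simp add: H_def pihalf)
    have h2: "H d (p - 1/2) = p - 1/2 + d" by (simp add: H_def pdiff pip pihalf)
    have pi32: "\<pi> (3/2 - 2*p) = -2"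
    proof -
      have a: "\<pi> (3/2) = 0" using padd[of 1 "1/2"] p1 pihalf by simp
      have "2 * p = p + p" by simp
      then have b: "\<pi> (2*p) = 2" using padd[of p p] pip by simp
      show ?thesis using pdiff[of "3/2" "2*p"] a b by simp
    qed
    have h3: "H d (3/2 - 2*p) = 3/2 - 2*p - 2*d" by (simp add: H_def pi32)
    have pr1: "p * (1 - p) = p - 1/2" "(1 - p) * p = p - 1/2" "(1 - p) * (1 - p) = 3/2 - 2*p"
      using pp by (simp_all add: algebra_simps)
    have Hnn: "H d (P a * P b) \<ge> 0" for a b
    proof -
      have "P a * P b \<in> {0, 1/2, p - 1/2, 3/2 - 2*p}"
        using pp pr1 by (auto simp: X4 P_def)
      then consider "P a * P b = 0" | "P a * P b = 1/2" | "P a * P b = p - 1/2" | "P a * P b = 3/2 - 2*p"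
        by blast
      then show ?thesis
      proof cases
        case 1 then show ?thesis by (simp only: H0 order_refl)
      next
        case 2 then show ?thesis by (simp only: h1)
      next
        case 3 then have "H d (P a * P b) = p - 1/2 + d" by (simp only: h2)
        then show ?thesis using d plo by linarith
      next
        case 4 then have "H d (P a * P b) = 3/2 - 2*p - 2*d" by (simp only: h3)
        then show ?thesis using d phi by linarith
      qed
    qed
    have dM': "is_dstruc {} 2 M'"
    proof -
      have "(\<Sum>l\<in>tuples 2 {0,1}. fM' l) = 1"
        unfolding fM'_def H_sum[symmetric] sumfM by simp
      moreover have "fM' l \<ge> 0" for l using Hnn by (simp add: fM'_def fM_def)
      moreover have "fM' l = 0" if "l \<notin> tuples 2 {0,1}" for l using fM_out[OF that] by (simp add: fM'_def)
      ultimately show ?thesis unfolding is_dstruc_def by (simp add: M'_def M_def)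
    qed
    have "M' \<in> Struc_ESO {} f psi" using dM' sM' sf by (simp add: Struc_ESO_def)
    then have "M' \<in> Struc_FO {} [0,1] (FInd [0] [1])" using eq by simp
    then have fs: "fo_sat M' (FInd [0] [1]) {0,1} (team_of M' [0,1])" by (simp add: Struc_FO_def)
    have X': "team_of M' [0,1] = (\<lambda>s. H d (X s))"
      by (auto simp: fun_eq_iff team_of_def X_def M'_def M_def fM'_def)
    have P0: "P 0 = p" by (simp add: P_def)
    have wH: "weight A V (\<lambda>s. H d (Y s)) ys b = H d (weight A V Y ys b)" for A V Y ys b
      by (simp add: weight_def H_sum)
    have "weight {0,1} {0,1} (\<lambda>s. H d (X s)) [0] [0] * weight {0,1} {0,1} (\<lambda>s. H d (X s)) [1] [0] =
      weight {0,1} {0,1} (\<lambda>s. H d (X s)) ([0] @ [1]) ([0] @ [0]) * (\<Sum>s\<in>asgs {0,1} {0,1}. H d (X s))"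
      using fs unfolding X' fo_sat.simps uM' by auto
    then have "H d p * H d p = H d (1/2) * H d 1"
      unfolding wH H_sum[symmetric] append.simps wx wy wxy tot P0 pp .
    then have "(p + d) * (p + d) = 1/2" by (simp add: H_def pip pihalf p1)
    then have "d * (2 * p + d) = 0" using pp by (simp add: algebra_simps)
    then show False using d plo by simp
  qed
  qed
  show ?thesis
  proof (intro exI[of _ "{}"] exI[of _ "FInd [0] [1]"] exI[of _ "[0,1]"] conjI)
    show "\<forall>psi f. eso_wf {} psi \<and> in_frag {OPlus} {CLe} {0, 1} psi \<and>
        snd f = length [0::nat,1] \<and> eso_ffv psi \<subseteq> {f} \<and> eso_fv psi = {} \<longrightarrow>
        Struc_FO {} [0,1] (FInd [0] [1]) \<noteq> Struc_ESO {} f psi"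
      using main by blast
  qed auto
qed

end
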